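(* Let $(X,d)$ be a compact metric space, $k\geq1$, and $T:\mathbb{Z}^k\times X\to X$ a continuous action, and let $c>0$ be such that any two distinct $x,y\in X$ satisfy $\sup_{u\in\mathbb{Z}^k}d(T^ux,T^uy)>2c$. Then there exists $\delta>0$ such that whenever $N\geq1$ and $x,y\in X$ satisfy $c\leq d^T_{[-N,N]^k}(x,y)\leq 2c$, we have $d^T_{\partial[-N,N]^k}(x,y)>\delta$.
   Context: For $\Omega\subset\mathbb{R}^k$, $d^T_\Omega(x,y)=\sup_{u\in\Omega\cap\mathbb{Z}^k}d(T^ux,T^uy)$. $\partial[-N,N]^k=\bigcup_{i=1}^k\{x\in[-N,N]^k: x_i\in\{-N,N\}\}$. *)

theory Defs
  imports "HOL-Analysis.Analysis"
begin

text \<open>A (continuous) action of the group Z^k (as int ^ 'k) on a set X of a metric space.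
  Z^k carries the discrete topology, so continuity of the action amounts to continuity of each T u.\<close>
definition Zk_action :: "'a::metric_space set \<Rightarrow> (int ^ 'k \<Rightarrow> 'a \<Rightarrow> 'a) \<Rightarrow> bool" where
  "Zk_action X T \<longleftrightarrow>
     (\<forall>u. T u ` X \<subseteq> X) \<and>
     (\<forall>x\<in>X. T 0 x = x) \<and>
     (\<forall>u v. \<forall>x\<in>X. T (u + v) x = T u (T v x)) \<and>
     (\<forall>u. continuous_on X (T u))"

text \<open>d^T_Omega(x,y) = sup over lattice points u in Omega of d(T^u x, T^u y);
  Omega is given directly as its set of lattice points.\<close>
definition dT :: "(int ^ 'k \<Rightarrow> 'a::metric_space \<Rightarrow> 'a) \<Rightarrow> (int ^ 'k) set \<Rightarrow> 'a \<Rightarrow> 'a \<Rightarrow> real" where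
  "dT T \<Omega> x y = (SUP u\<in>\<Omega>. dist (T u x) (T u y))"

definition cube :: "nat \<Rightarrow> (int ^ 'k) set" where
  "cube N = {u. \<forall>i. \<bar>u $ i\<bar> \<le> int N}"

definition cube_boundary :: "nat \<Rightarrow> (int ^ 'k) set" where
  "cube_boundary N = {u \<in> cube N. \<exists>i. \<bar>u $ i\<bar> = int N}"

end

theory Submission
  imports Defs
begin

lemma fin_cube: "finite (cube N :: (int ^ 'k) set)"
proof -
  have "(cube N :: (int ^ 'k) set) \<subseteq> vec_lambda ` (Pi\<^sub>E UNIV (\<lambda>_. {-int N..int N}))"
  proof
    fix u :: "int ^ 'k" assume "u \<in> cube N"
    then have "\<And>i. \<bar>u $ i\<bar> \<le> int N" by (auto simp: cube_def)
    then have "\<And>i. -int N \<le> u $ i \<and> u $ i \<le> int N" by (metis abs_le_iff minus_le_iff)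
    then have "(\<lambda>i. u $ i) \<in> Pi\<^sub>E UNIV (\<lambda>_. {-int N..int N})"
      by auto
    moreover have "u = vec_lambda (\<lambda>i. u $ i)" by simp
    ultimately show "u \<in> vec_lambda ` (Pi\<^sub>E UNIV (\<lambda>_. {-int N..int N}))" by blast
  qed
  moreover have "finite (Pi\<^sub>E (UNIV::'k set) (\<lambda>_. {-int N..int N}))" by (intro finite_PiE) auto
  ultimately show ?thesis using finite_subset by blast
qed

lemma cont_pair:
  assumes "continuous_on X f"
  shows "continuous_on (X \<times> X) (\<lambda>p. dist (f (fst p)) (f (snd p)))"
proof -
  have "continuous_on (X \<times> X) (f \<circ> fst)"
    by (rule continuous_on_compose) (auto intro: continuous_on_fst continuous_on_id continuous_on_subset[OF assms])
  moreover have "continuous_on (X \<times> X) (f \<circ> snd)"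
    by (rule continuous_on_compose) (auto intro: continuous_on_snd continuous_on_id continuous_on_subset[OF assms])
  ultimately show ?thesis by (auto intro: continuous_on_dist simp: o_def)
qed

theorem lemma3p1:
  fixes X :: "'a::metric_space set" and T :: "int ^ 'k \<Rightarrow> 'a \<Rightarrow> 'a" and c :: real
  assumes "compact X"
    and "Zk_action X T"
    and "c > 0"
    and "\<forall>x\<in>X. \<forall>y\<in>X. x \<noteq> y \<longrightarrow> dT T UNIV x y > 2 * c"
  shows "\<exists>\<delta>>0. \<forall>N::nat. \<forall>x\<in>X. \<forall>y\<in>X.
           N \<ge> 1 \<and> c \<le> dT T (cube N) x y \<and> dT T (cube N) x y \<le> 2 * c
           \<longrightarrow> dT T (cube_boundary N) x y > \<delta>"
proof -
  have maps: "\<And>u x. x \<in> X \<Longrightarrow> T u x \<in> X" using assms(2) unfolding Zk_action_def by blast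
  have zero: "\<And>x. x \<in> X \<Longrightarrow> T 0 x = x" using assms(2) unfolding Zk_action_def by blast
  have add: "\<And>u v x. x \<in> X \<Longrightarrow> T (u + v) x = T u (T v x)" using assms(2) unfolding Zk_action_def by blast
  have cont: "\<And>u. continuous_on X (T u)" using assms(2) unfolding Zk_action_def by blast
  obtain B where B: "\<forall>x\<in>X. \<forall>y\<in>X. dist x y \<le> B"
    using compact_imp_bounded[OF assms(1)] bounded_two_points by blast
  have bdd: "bdd_above ((\<lambda>u. dist (T u x) (T u y)) ` S)" if "x \<in> X" "y \<in> X" for S x y
    using B maps that by (intro bdd_aboveI[of _ B]) auto
  have inj: "x = y" if "x \<in> X" "y \<in> X" "T w x = T w y" for w x y
  proof -
    have "x = T ((-w) + w) x" using zero that by simp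
    also have "\<dots> = T (-w) (T w x)" using add that by blast
    also have "\<dots> = T (-w) (T w y)" using that by simp
    also have "\<dots> = T ((-w) + w) y" using add that by metis
    also have "\<dots> = y" using zero that by simp
    finally show ?thesis .
  qed
  define K where "K = (X \<times> X) \<inter> {p. c/2 \<le> dist (fst p) (snd p)}"
  have Kc: "compact K" unfolding K_def
    by (intro compact_Int_closed compact_Times assms(1) closed_Collect_le continuous_intros)
  have KX: "\<And>p. p \<in> K \<Longrightarrow> fst p \<in> X \<and> snd p \<in> X" unfolding K_def by auto
  have Kd: "\<And>p. p \<in> K \<Longrightarrow> c/2 \<le> dist (fst p) (snd p)" unfolding K_def by auto
  obtain M where A: "\<forall>p\<in>K. \<exists>w\<in>cube M. dist (T w (fst p)) (T w (snd p)) > 2 * c"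
  proof -
    have "\<exists>A. open A \<and> A \<inter> (X \<times> X) = (\<lambda>p. dist (T u (fst p)) (T u (snd p))) -` {2*c<..} \<inter> (X \<times> X)" for u
    proof -
      have "open {2*c<..}" by simp
      then show ?thesis using cont_pair[OF cont[of u]] unfolding continuous_on_open_invariant by blast
    qed
    then obtain Aset where Aset: "\<And>u. open (Aset u)"
      "\<And>u. Aset u \<inter> (X \<times> X) = (\<lambda>p. dist (T u (fst p)) (T u (snd p))) -` {2*c<..} \<inter> (X \<times> X)"
      by metis
    have cov: "K \<subseteq> (\<Union>u\<in>UNIV. Aset u)"
    proof
      fix p assume p: "p \<in> K"
      have "fst p \<noteq> snd p" using Kd[OF p] assms(3) by auto
      then have "2 * c < dT T UNIV (fst p) (snd p)" using assms(4) KX[OF p] by blast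
      then obtain u where "2 * c < dist (T u (fst p)) (T u (snd p))"
        unfolding dT_def using less_cSUP_iff[OF _ bdd] KX[OF p] by blast
      then have "p \<in> Aset u" using Aset(2)[of u] KX[OF p] by (cases p) auto
      then show "p \<in> (\<Union>u\<in>UNIV. Aset u)" by blast
    qed
    obtain F where F: "finite F" "K \<subseteq> (\<Union>u\<in>F. Aset u)"
      by (rule compactE_image[OF Kc, of UNIV Aset]) (use Aset(1) cov in auto)
    define M where "M = Max (insert 0 ((\<lambda>(u, i). nat \<bar>u $ i\<bar>) ` (F \<times> (UNIV :: 'k set))))"
    have fin: "finite (insert 0 ((\<lambda>(u, i). nat \<bar>u $ i\<bar>) ` (F \<times> (UNIV :: 'k set))))"
      using F(1) by auto
    have FM: "u \<in> cube M" if "u \<in> F" for u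
    proof -
      have n: "nat \<bar>u $ i\<bar> \<le> M" for i
        unfolding M_def using that by (intro Max_ge[OF fin]) auto
      have "\<bar>u $ i\<bar> \<le> int M" for i using n[of i] by (simp add: nat_le_iff)
      then show ?thesis unfolding cube_def by auto
    qed
    show ?thesis
    proof (rule that[of M], intro ballI)
      fix p assume p: "p \<in> K"
      then obtain u where u: "u \<in> F" "p \<in> Aset u" using F(2) by blast
      then have "p \<in> Aset u \<inter> (X \<times> X)" using KX[OF p] by (cases p) auto
      then have "2 * c < dist (T u (fst p)) (T u (snd p))" using Aset(2)[of u] by auto
      then show "\<exists>w\<in>cube M. 2 * c < dist (T w (fst p)) (T w (snd p))" using FM u by blast
    qed
  qed
  have "\<forall>w\<in>cube M. \<exists>d>0. \<forall>p\<in>K. d \<le> dist (T w (fst p)) (T w (snd p))"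
  proof
    fix w :: "int ^ 'k"
    show "\<exists>d>0. \<forall>p\<in>K. d \<le> dist (T w (fst p)) (T w (snd p))"
    proof (cases "K = {}")
      case True then show ?thesis by (intro exI[of _ 1]) auto
    next
      case False
      have "continuous_on K (\<lambda>p. dist (T w (fst p)) (T w (snd p)))"
        using cont_pair[OF cont[of w]] by (rule continuous_on_subset) (auto simp: K_def)
      then obtain p0 where p0: "p0 \<in> K" "\<forall>p\<in>K. dist (T w (fst p0)) (T w (snd p0)) \<le> dist (T w (fst p)) (T w (snd p))"
        using continuous_attains_inf[OF Kc False] by blast
      have "fst p0 \<noteq> snd p0" using Kd[OF p0(1)] assms(3) by auto
      then have "T w (fst p0) \<noteq> T w (snd p0)" using inj KX[OF p0(1)] by blast
      then show ?thesis using p0(2) by (intro exI[of _ "dist (T w (fst p0)) (T w (snd p0))"]) auto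
    qed
  qed
  then obtain dd where dd: "\<And>w::int^'k. w \<in> cube M \<Longrightarrow> dd w > 0"
    "\<And>(w::int^'k) p. w \<in> cube M \<Longrightarrow> p \<in> K \<Longrightarrow> dd w \<le> dist (T w (fst p)) (T w (snd p))"
    by metis
  define \<delta> where "\<delta> = Min (dd ` cube M)"
  have c0: "(0::int^'k) \<in> cube M" by (simp add: cube_def)
  have \<delta>pos: "\<delta> > 0" unfolding \<delta>_def using fin_cube c0 dd(1) by (subst Min_gr_iff) auto
  have C: "\<And>(w::int^'k) p. w \<in> cube M \<Longrightarrow> p \<in> K \<Longrightarrow> \<delta> \<le> dist (T w (fst p)) (T w (snd p))"
  proof -
    fix w :: "int^'k" and p assume w: "w \<in> cube M" and p: "p \<in> K"
    have "\<delta> \<le> dd w" unfolding \<delta>_def using fin_cube w by (intro Min_le) auto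
    then show "\<delta> \<le> dist (T w (fst p)) (T w (snd p))" using dd(2)[OF w p] by linarith
  qed
  show ?thesis
  proof (rule exI[of _ "\<delta>/2"], intro conjI allI ballI impI)
    show "\<delta>/2 > 0" using \<delta>pos by simp
    fix N :: nat and x y
    assume xy: "x \<in> X" "y \<in> X"
      and H: "1 \<le> N \<and> c \<le> dT T (cube N) x y \<and> dT T (cube N) x y \<le> 2 * c"
    have cN: "(0::int^'k) \<in> cube N" by (simp add: cube_def)
    have "c/2 < dT T (cube N) x y" using H assms(3) by linarith
    then obtain u where u: "u \<in> cube N" "c/2 < dist (T u x) (T u y)"
      unfolding dT_def using less_cSUP_iff[OF _ bdd[OF xy]] cN by blast
    define x' where "x' = T u x"
    define y' where "y' = T u y"
    have x'y': "x' \<in> X" "y' \<in> X" using maps xy by (auto simp: x'_def y'_def)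
    have pK: "(x', y') \<in> K" using x'y' u(2) by (auto simp: K_def x'_def y'_def)
    obtain w where w: "w \<in> cube M" "2 * c < dist (T w x') (T w y')" using A pK by fastforce
    have shift: "T (v + u) x = T v x' \<and> T (v + u) y = T v y'" for v
      using add xy by (simp add: x'_def y'_def)
    have "u + w \<notin> cube N"
    proof
      assume "u + w \<in> cube N"
      then have "dist (T (w + u) x) (T (w + u) y) \<le> dT T (cube N) x y"
        unfolding dT_def by (simp add: add.commute cSUP_upper[OF _ bdd[OF xy]])
      then have "dist (T w x') (T w y') \<le> dT T (cube N) x y" using shift[of w] by simp
      then show False using w(2) H by linarith
    qed
    then obtain i where i: "\<bar>u $ i + w $ i\<bar> > int N" by (auto simp: cube_def not_le)
    have uN: "\<And>j. \<bar>u $ j\<bar> \<le> int N" using u(1) by (auto simp: cube_def)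
    have wM: "\<And>j. \<bar>w $ j\<bar> \<le> int M" using w(1) by (auto simp: cube_def)
    define v :: "int ^ 'k" where "v = (\<chi> j. max (- int N) (min (int N) (u $ j + w $ j)))"
    define w' where "w' = v - u"
    have vj: "v $ j = max (- int N) (min (int N) (u $ j + w $ j))" for j by (simp add: v_def)
    have vB: "v \<in> cube_boundary N"
    proof -
      have "\<bar>v $ j\<bar> \<le> int N" for j unfolding vj by auto
      moreover have "\<bar>v $ i\<bar> = int N" unfolding vj using i by auto
      ultimately show ?thesis by (auto simp: cube_boundary_def cube_def)
    qed
    have w'M: "w' \<in> cube M"
    proof -
      have "\<bar>w' $ j\<bar> \<le> int M" for j
      proof -
        have "\<bar>v $ j - u $ j\<bar> \<le> \<bar>w $ j\<bar>" unfolding vj using uN[of j] by auto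
        then show ?thesis using wM[of j] by (simp add: w'_def)
      qed
      then show ?thesis by (auto simp: cube_def)
    qed
    have "v = w' + u" by (simp add: w'_def)
    then have "dist (T v x) (T v y) = dist (T w' x') (T w' y')" using shift by simp
    also have "\<dots> \<ge> \<delta>" using C[OF w'M pK] by simp
    finally have "\<delta> \<le> dist (T v x) (T v y)" .
    moreover have "dist (T v x) (T v y) \<le> dT T (cube_boundary N) x y"
      unfolding dT_def using vB by (intro cSUP_upper bdd[OF xy])
    ultimately show "\<delta>/2 < dT T (cube_boundary N) x y" using \<delta>pos by linarith
  qed
qed

end
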